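(* Let $A$ be $\phi_A$-uniformly monotone and $B$ be $\phi_B$-uniformly monotone, let $x\in\operatorname{zer}(A+B)$, and let $(x_n)$, $(y_n)$, $(r_n)$ be generated by the reflected stochastic forward–backward iteration with step sizes $(\gamma_n)$. For every $n\ge 1$ set $$\epsilon_n=2\gamma_n\big(\phi_A(\|x_{n+1}-x\|)+\phi_A(\|x_{n+1}-x_n\|)+\phi_B(\|y_n-x\|)\big).$$ Then, for every $n\ge1$ (pointwise on $\Omega$), $$\|x_{n+1}-x\|^2+\epsilon_n+\Big(3-\frac{\gamma_n}{\gamma_{n-1}}\Big)\|x_{n+1}-x_n\|^2+\frac{\gamma_n}{\gamma_{n-1}}\|x_{n+1}-y_n\|^2+2\gamma_n\langle r_n-Bx,x_{n+1}-x_n\rangle$$ $$\le\|x_n-x\|^2+2\gamma_n\langle r_{n-1}-Bx,x_n-x_{n-1}\rangle+2\gamma_n\langle r_{n-1}-r_n,x_{n+1}-y_n\rangle+\frac{\gamma_n}{\gamma_{n-1}}\|x_n-y_n\|^2+2\gamma_n\langle r_n-By_n,x-y_n\rangle.$$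
   Context: $\mathcal H$ is a separable real Hilbert space with inner product $\langle\cdot,\cdot\rangle$ and norm $\|\cdot\|$; $(\Omega,\mathcal F,\mathsf P)$ is a probability space. $A:\mathcal H\to2^{\mathcal H}$ is maximally monotone and $B:\mathcal H\to\mathcal H$ is monotone and $\mu$-Lipschitz continuous. $\operatorname{zer}(A+B)=\{x:0\in Ax+Bx\}$. For $\gamma>0$, $J_{\gamma A}=(\mathrm{Id}+\gamma A)^{-1}$ is the resolvent. An operator $M$ is $\phi$-uniformly monotone, where $\phi:[0,\infty[\to[0,\infty]$ is increasing with $\phi(0)=0$ (the choice $\phi\equiv0$ corresponding to mere monotonicity), if $\langle x-y,u-v\rangle\ge\phi(\|x-y\|)$ for all $(x,u),(y,v)\in\operatorname{gra}M$. Reflected stochastic forward–backward iteration: $(\gamma_n)_{n\ge -1}$ is a sequence in $]0,+\infty[$, $x_0,x_{-1}$ are square-integrable $\mathcal H$-valued random variables, and for every $n\in\mathbb N$: $y_n=2x_n-x_{n-1}$; $r_n$ is an $\mathcal H$-valued random variable with $\mathsf E[r_n\mid\mathcal F_n]=By_n$, where $\mathcal F_n=\sigma(x_0,\dots,x_n)$; and $x_{n+1}=J_{\gamma_nA}(x_n-\gamma_nr_n)$. *)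

theory Defs
  imports "HOL-Analysis.Analysis" "HOL-Probability.Probability"
begin

text \<open>Set-valued operators on a real Hilbert space are modelled as maps 'a \<Rightarrow> 'a set;
  the graph of A is the set of pairs (x,u) with u \<in> A x.\<close>

definition monotone_op :: "('a::real_inner \<Rightarrow> 'a set) \<Rightarrow> bool" where
  "monotone_op A \<longleftrightarrow> (\<forall>x y u v. u \<in> A x \<longrightarrow> v \<in> A y \<longrightarrow> inner (x - y) (u - v) \<ge> 0)"

definition maximally_monotone :: "('a::real_inner \<Rightarrow> 'a set) \<Rightarrow> bool" where
  "maximally_monotone A \<longleftrightarrow> monotone_op A \<and>
     (\<forall>x u. (\<forall>y v. v \<in> A y \<longrightarrow> inner (x - y) (u - v) \<ge> 0) \<longrightarrow> u \<in> A x)"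

definition admissible_modulus :: "(real \<Rightarrow> ereal) \<Rightarrow> bool" where
  "admissible_modulus \<phi> \<longleftrightarrow> mono_on {0..} \<phi> \<and> \<phi> 0 = 0 \<and> (\<forall>t\<ge>0. \<phi> t \<ge> 0)"

definition uniformly_monotone :: "(real \<Rightarrow> ereal) \<Rightarrow> ('a::real_inner \<Rightarrow> 'a set) \<Rightarrow> bool" where
  "uniformly_monotone \<phi> M \<longleftrightarrow>
     (\<forall>x y u v. u \<in> M x \<longrightarrow> v \<in> M y \<longrightarrow> ereal (inner (x - y) (u - v)) \<ge> \<phi> (norm (x - y)))"

definition zer_sum :: "('a::real_vector \<Rightarrow> 'a set) \<Rightarrow> ('a \<Rightarrow> 'a) \<Rightarrow> 'a set" where
  "zer_sum A B = {x. 0 \<in> (\<lambda>u. u + B x) ` A x}"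

text \<open>Resolvent J_{\<gamma>A} = (Id + \<gamma>A)^{-1}, as the (set-valued) inverse:
  p \<in> resolvent \<gamma> A z iff z \<in> p + \<gamma> A p.\<close>
definition resolvent :: "real \<Rightarrow> ('a::real_vector \<Rightarrow> 'a set) \<Rightarrow> 'a \<Rightarrow> 'a set" where
  "resolvent \<gamma> A z = {p. z \<in> (\<lambda>u. p + \<gamma> *\<^sub>R u) ` A p}"

definition natural_filtration :: "'w measure \<Rightarrow> (int \<Rightarrow> 'w \<Rightarrow> 'a::topological_space) \<Rightarrow> int \<Rightarrow> 'w measure" where
  "natural_filtration M x n =
     sigma (space M) {x k -` U \<inter> space M | k U. 0 \<le> k \<and> k \<le> n \<and> U \<in> sets borel}"

text \<open>E[X | F] = Z (defining property of the conditional expectation of a Bochner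
  integrable Hilbert-space valued random variable).\<close>
definition cond_exp_is :: "'w measure \<Rightarrow> 'w measure \<Rightarrow> ('w \<Rightarrow> 'a::{banach, second_countable_topology})
    \<Rightarrow> ('w \<Rightarrow> 'a) \<Rightarrow> bool" where
  "cond_exp_is M F X Z \<longleftrightarrow> integrable M X \<and> Z \<in> borel_measurable F \<and> integrable M Z \<and>
     (\<forall>S \<in> sets F. (LINT w:S|M. X w) = (LINT w:S|M. Z w))"

end

theory Submission
  imports Defs
begin

lemma key:
  fixes a b p z un um uz By r r' y Bz :: "'a::real_inner" and g g' :: real
  assumes g: "g > 0" "g' > 0"
    and hr: "g *\<^sub>R r = a - p - g *\<^sub>R un"
    and hr': "g' *\<^sub>R r' = b - a - g' *\<^sub>R um"
    and hy: "y = 2 *\<^sub>R a - b" and hz: "Bz = - uz"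
  shows "(norm (p - z))\<^sup>2 + 2*g*(inner (p-z) (un - uz) + inner (p-a) (un-um) + inner (y - z) (By - Bz))
     + ((3 - g/g') * (norm (p - a))\<^sup>2 + g/g' * (norm (p - y))\<^sup>2 + 2 * g * inner (r - Bz) (p - a))
   = (norm (a - z))\<^sup>2 + 2*g*inner (r' - Bz) (a - b) + 2*g*inner (r' - r) (p - y)
     + g/g' * (norm (a - y))\<^sup>2 + 2 * g * inner (r - By) (z - y)"
proof -
  have r: "r = (1/g) *\<^sub>R (a - p) - un" proof -
    have "r = (1/g) *\<^sub>R (g *\<^sub>R r)" using g by simp
    also have "\<dots> = (1/g) *\<^sub>R (a - p) - un" unfolding hr using g by (simp add: scaleR_diff_right)
    finally show ?thesis .
  qed
  have r': "r' = (1/g') *\<^sub>R (b - a) - um" proof -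
    have "r' = (1/g') *\<^sub>R (g' *\<^sub>R r')" using g by simp
    also have "\<dots> = (1/g') *\<^sub>R (b - a) - um" unfolding hr' using g by (simp add: scaleR_diff_right)
    finally show ?thesis .
  qed
  show ?thesis unfolding r r' hy hz
    using g
    apply (simp add: power2_norm_eq_inner inner_diff_left inner_diff_right inner_add_left inner_add_right inner_commute)
    apply (simp add: field_simps)
    done
qed


theorem mainTheorem2:
  fixes M :: "'w measure"
    and A :: "'a::{real_inner, banach, second_countable_topology} \<Rightarrow> 'a set"
    and B :: "'a \<Rightarrow> 'a"
    and \<mu> :: real and \<phi>A \<phi>B :: "real \<Rightarrow> ereal"
    and \<gamma> :: "int \<Rightarrow> real"
    and x y r :: "int \<Rightarrow> 'w \<Rightarrow> 'a"
    and z :: 'a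
  assumes P: "prob_space M"
    and A_max: "maximally_monotone A"
    and B_mono: "monotone_op (\<lambda>u. {B u})"
    and B_lip: "\<mu>-lipschitz_on UNIV B"
    and phiA: "admissible_modulus \<phi>A" and A_unif: "uniformly_monotone \<phi>A A"
    and phiB: "admissible_modulus \<phi>B" and B_unif: "uniformly_monotone \<phi>B (\<lambda>u. {B u})"
    and z_zer: "z \<in> zer_sum A B"
    and gamma_pos: "\<And>n. n \<ge> -1 \<Longrightarrow> \<gamma> n > 0"
    and x0_meas: "x 0 \<in> borel_measurable M" and x0_sq: "integrable M (\<lambda>w. (norm (x 0 w))\<^sup>2)"
    and xm1_meas: "x (-1) \<in> borel_measurable M" and xm1_sq: "integrable M (\<lambda>w. (norm (x (-1) w))\<^sup>2)"
    and y_def: "\<And>n w. n \<ge> 0 \<Longrightarrow> y n w = 2 *\<^sub>R x n w - x (n - 1) w"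
    and r_meas: "\<And>n. n \<ge> 0 \<Longrightarrow> r n \<in> borel_measurable M"
    and r_cond: "\<And>n. n \<ge> 0 \<Longrightarrow> cond_exp_is M (natural_filtration M x n) (r n) (\<lambda>w. B (y n w))"
    and x_step: "\<And>n w. n \<ge> 0 \<Longrightarrow> w \<in> space M \<Longrightarrow>
                   x (n + 1) w \<in> resolvent (\<gamma> n) A (x n w - \<gamma> n *\<^sub>R r n w)"
    and n_ge: "n \<ge> 1"
    and w_in: "w \<in> space M"
  shows "ereal ((norm (x (n + 1) w - z))\<^sup>2)
         + ereal (2 * \<gamma> n) * (\<phi>A (norm (x (n + 1) w - z)) + \<phi>A (norm (x (n + 1) w - x n w))
                               + \<phi>B (norm (y n w - z)))
         + ereal ((3 - \<gamma> n / \<gamma> (n - 1)) * (norm (x (n + 1) w - x n w))\<^sup>2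
                  + \<gamma> n / \<gamma> (n - 1) * (norm (x (n + 1) w - y n w))\<^sup>2
                  + 2 * \<gamma> n * inner (r n w - B z) (x (n + 1) w - x n w))
       \<le> ereal ((norm (x n w - z))\<^sup>2
                + 2 * \<gamma> n * inner (r (n - 1) w - B z) (x n w - x (n - 1) w)
                + 2 * \<gamma> n * inner (r (n - 1) w - r n w) (x (n + 1) w - y n w)
                + \<gamma> n / \<gamma> (n - 1) * (norm (x n w - y n w))\<^sup>2
                + 2 * \<gamma> n * inner (r n w - B (y n w)) (z - y n w))"
proof -
  define p a b where "p = x (n+1) w" and "a = x n w" and "b = x (n-1) w"
  define g g' where "g = \<gamma> n" and "g' = \<gamma> (n-1)"
  have g: "g > 0" "g' > 0" using gamma_pos n_ge unfolding g_def g'_def by auto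
  have yy: "y n w = 2 *\<^sub>R a - b" using y_def n_ge unfolding a_def b_def by auto
  obtain un where un: "un \<in> A p" "x n w - \<gamma> n *\<^sub>R r n w = p + \<gamma> n *\<^sub>R un"
    using x_step[of n w] n_ge w_in unfolding resolvent_def p_def by auto
  obtain um where um: "um \<in> A a" "x (n-1) w - \<gamma> (n-1) *\<^sub>R r (n-1) w = a + \<gamma> (n-1) *\<^sub>R um"
    using x_step[of "n-1" w] n_ge w_in unfolding resolvent_def a_def by auto
  obtain uz where uz: "uz \<in> A z" "uz + B z = 0"
    using z_zer unfolding zer_sum_def by auto
  have Bz: "B z = - uz" using uz(2) by (simp add: eq_neg_iff_add_eq_0 add.commute)
  have hr: "g *\<^sub>R r n w = a - p - g *\<^sub>R un" using un(2) unfolding g_def a_def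
    by (simp add: algebra_simps)
  have hr': "g' *\<^sub>R r (n-1) w = b - a - g' *\<^sub>R um" using um(2) unfolding g'_def b_def
    by (simp add: algebra_simps)
  note K = key[OF g hr hr' yy Bz, of z "B (y n w)"]
  define I1 where "I1 = inner (p-z) (un - uz)"
  define I2 where "I2 = inner (p-a) (un-um)"
  define I3 where "I3 = inner (y n w - z) (B (y n w) - B z)"
  have f1: "\<phi>A (norm (p - z)) \<le> ereal I1" using A_unif un(1) uz(1)
    unfolding uniformly_monotone_def I1_def by blast
  have f2: "\<phi>A (norm (p - a)) \<le> ereal I2" using A_unif un(1) um(1)
    unfolding uniformly_monotone_def I2_def by blast
  have f3: "\<phi>B (norm (y n w - z)) \<le> ereal I3" using B_unif
    unfolding uniformly_monotone_def I3_def by blast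
  have nn: "\<phi>A (norm (p - z)) \<ge> 0" "\<phi>A (norm (p - a)) \<ge> 0" "\<phi>B (norm (y n w - z)) \<ge> 0"
    using phiA phiB unfolding admissible_modulus_def by auto
  have "ereal (2 * g) * (\<phi>A (norm (p - z)) + \<phi>A (norm (p - a)) + \<phi>B (norm (y n w - z)))
      \<le> ereal (2 * g) * ereal (I1 + I2 + I3)"
    apply (rule ereal_mult_left_mono)
    using add_mono[OF add_mono[OF f1 f2] f3] apply simp
    using g by simp
  then have H: "ereal ((norm (p - z))\<^sup>2)
         + ereal (2 * g) * (\<phi>A (norm (p - z)) + \<phi>A (norm (p - a)) + \<phi>B (norm (y n w - z)))
         + ereal ((3 - g / g') * (norm (p - a))\<^sup>2 + g / g' * (norm (p - y n w))\<^sup>2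
                  + 2 * g * inner (r n w - B z) (p - a))
       \<le> ereal ((norm (p - z))\<^sup>2) + ereal (2 * g) * ereal (I1 + I2 + I3)
         + ereal ((3 - g / g') * (norm (p - a))\<^sup>2 + g / g' * (norm (p - y n w))\<^sup>2
                  + 2 * g * inner (r n w - B z) (p - a))"
    by (intro add_mono order_refl)
  also have "\<dots> = ereal ((norm (a - z))\<^sup>2
                + 2 * g * inner (r (n - 1) w - B z) (a - b)
                + 2 * g * inner (r (n - 1) w - r n w) (p - y n w)
                + g / g' * (norm (a - y n w))\<^sup>2
                + 2 * g * inner (r n w - B (y n w)) (z - y n w))"
    using K unfolding I1_def I2_def I3_def by simp
  finally show ?thesis unfolding p_def a_def b_def g_def g'_def .
qed

end
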